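(* Let $(L_*,b)$ and $(M_*,b)$ be chain complexes, $i:(L_*,b)\to(M_*,b)$ and $p:(M_*,b)\to(L_*,b)$ chain maps, and $h$ a map of degree $+1$ on $M_*$ with $ip=1+bh+hb$. Let $\delta$ be a small perturbation, put $A=(1-\delta h)^{-1}\delta$, and define $$i_\infty=i+hAi,\quad p_\infty=p+pAh,\quad b_\infty=b+pAi.$$ Then each of the following chain maps is null-homotopic: - $i\circ(p i_\infty-1):(L_*,b_\infty)\to(M_*,b)$; - $(p_\infty i-1)\circ p:(M_*,b)\to(L_*,b_\infty)$; - $(p i_\infty-1)\circ p_\infty:(M_*,b+\delta)\to(L_*,b)$; - $i_\infty\circ(p_\infty i-1):(L_*,b)\to(M_*,b+\delta)$.
   Context: Complexes are chain complexes of modules over a ring, with differentials of degree $-1$. A perturbation $\delta$ is a graded map $M_*\to M_*$ of the same degree as $b$ such that $(b+\delta)^2=0$. It is called small if $1-\delta h$ is invertible. It is known (homological perturbation lemma, HR version) that for a small perturbation, $(L_*,b_\infty)$ is a complex, that $i_\infty:(L_*,b_\infty)\to(M_*,b+\delta)$ and $p_\infty:(M_*,b+\delta)\to(L_*,b_\infty)$ are chain maps, and that $i_\infty p_\infty=1+(b+\delta)h_\infty+h_\infty(b+\delta)$, where $h_\infty=h+hAh$. Moreover, $p_\infty i-1:(L_*,b)\to(L_*,b_\infty)$ and $p i_\infty-1:(L_*,b_\infty)\to(L_*,b)$ are chain maps. *)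

theory Defs
  imports Main
begin

text \<open>Graded modules over a ring 'r are modelled as families of carriers
  M :: int => 'v set inside an abelian group 'v with a scalar action
  s :: 'r => 'v => 'v; M n is the module in degree n.\<close>

definition module_on :: "('r::ring_1 \<Rightarrow> 'v::ab_group_add \<Rightarrow> 'v) \<Rightarrow> 'v set \<Rightarrow> bool" where
  "module_on s S \<longleftrightarrow> 0 \<in> S \<and> (\<forall>x\<in>S. \<forall>y\<in>S. x + y \<in> S) \<and> (\<forall>x\<in>S. \<forall>r. s r x \<in> S)
     \<and> (\<forall>x\<in>S. \<forall>y\<in>S. \<forall>r. s r (x + y) = s r x + s r y)
     \<and> (\<forall>x\<in>S. \<forall>r q. s (r + q) x = s r x + s q x)
     \<and> (\<forall>x\<in>S. \<forall>r q. s (r * q) x = s r (s q x))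
     \<and> (\<forall>x\<in>S. s 1 x = x)"

definition graded_module :: "('r::ring_1 \<Rightarrow> 'v::ab_group_add \<Rightarrow> 'v) \<Rightarrow> (int \<Rightarrow> 'v set) \<Rightarrow> bool" where
  "graded_module s M \<longleftrightarrow> (\<forall>n. module_on s (M n))"

definition graded_map ::
  "('r::ring_1 \<Rightarrow> 'v::ab_group_add \<Rightarrow> 'v) \<Rightarrow> (int \<Rightarrow> 'v set) \<Rightarrow>
   ('r \<Rightarrow> 'w::ab_group_add \<Rightarrow> 'w) \<Rightarrow> (int \<Rightarrow> 'w set) \<Rightarrow> int \<Rightarrow> (int \<Rightarrow> 'v \<Rightarrow> 'w) \<Rightarrow> bool" where
  "graded_map sM M sN N d f \<longleftrightarrow> (\<forall>n.
     (\<forall>x\<in>M n. f n x \<in> N (n + d))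
     \<and> (\<forall>x\<in>M n. \<forall>y\<in>M n. f n (x + y) = f n x + f n y)
     \<and> (\<forall>x\<in>M n. \<forall>r. f n (sM r x) = sN r (f n x)))"

definition chain_complex ::
  "('r::ring_1 \<Rightarrow> 'v::ab_group_add \<Rightarrow> 'v) \<Rightarrow> (int \<Rightarrow> 'v set) \<Rightarrow> (int \<Rightarrow> 'v \<Rightarrow> 'v) \<Rightarrow> bool" where
  "chain_complex s M b \<longleftrightarrow> graded_module s M \<and> graded_map s M s M (-1) b
     \<and> (\<forall>n. \<forall>x\<in>M n. b (n - 1) (b n x) = 0)"

definition chain_map ::
  "('r::ring_1 \<Rightarrow> 'v::ab_group_add \<Rightarrow> 'v) \<Rightarrow> (int \<Rightarrow> 'v set) \<Rightarrow> (int \<Rightarrow> 'v \<Rightarrow> 'v) \<Rightarrow>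
   ('r \<Rightarrow> 'w::ab_group_add \<Rightarrow> 'w) \<Rightarrow> (int \<Rightarrow> 'w set) \<Rightarrow> (int \<Rightarrow> 'w \<Rightarrow> 'w) \<Rightarrow>
   (int \<Rightarrow> 'v \<Rightarrow> 'w) \<Rightarrow> bool" where
  "chain_map sM M bM sN N bN f \<longleftrightarrow> graded_map sM M sN N 0 f
     \<and> (\<forall>n. \<forall>x\<in>M n. bN n (f n x) = f (n - 1) (bM n x))"

definition null_homotopic ::
  "('r::ring_1 \<Rightarrow> 'v::ab_group_add \<Rightarrow> 'v) \<Rightarrow> (int \<Rightarrow> 'v set) \<Rightarrow> (int \<Rightarrow> 'v \<Rightarrow> 'v) \<Rightarrow>
   ('r \<Rightarrow> 'w::ab_group_add \<Rightarrow> 'w) \<Rightarrow> (int \<Rightarrow> 'w set) \<Rightarrow> (int \<Rightarrow> 'w \<Rightarrow> 'w) \<Rightarrow>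
   (int \<Rightarrow> 'v \<Rightarrow> 'w) \<Rightarrow> bool" where
  "null_homotopic sM M bM sN N bN f \<longleftrightarrow> (\<exists>s. graded_map sM M sN N 1 s
     \<and> (\<forall>n. \<forall>x\<in>M n. f n x = bN (n + 1) (s n x) + s (n - 1) (bM n x)))"

end

theory Submission
  imports Defs
begin


lemma mod_smul0: "module_on s S \<Longrightarrow> x \<in> S \<Longrightarrow> s 0 x = 0"
  unfolding module_on_def by (metis add.right_neutral add_cancel_right_right)

lemma mod_neg: assumes "module_on s S" "x \<in> S" shows "- x \<in> S"
proof -
  have "s (1 + -1) x = s 1 x + s (-1) x" using assms unfolding module_on_def by blast
  hence "s (-1) x = - x" using assms mod_smul0[OF assms] unfolding module_on_def
    by (metis add.right_inverse add_minus_cancel add.commute)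
  thus ?thesis using assms unfolding module_on_def by metis
qed

lemma mod_zero: "module_on s S \<Longrightarrow> 0 \<in> S" unfolding module_on_def by blast
lemma mod_add: "module_on s S \<Longrightarrow> x \<in> S \<Longrightarrow> y \<in> S \<Longrightarrow> x + y \<in> S" unfolding module_on_def by blast
lemma mod_diff: "module_on s S \<Longrightarrow> x \<in> S \<Longrightarrow> y \<in> S \<Longrightarrow> x - y \<in> S"
  using mod_add mod_neg by (metis diff_conv_add_uminus)
lemma mod_smul: "module_on s S \<Longrightarrow> x \<in> S \<Longrightarrow> s r x \<in> S" unfolding module_on_def by blast
lemma mod_smul_add: "module_on s S \<Longrightarrow> x \<in> S \<Longrightarrow> y \<in> S \<Longrightarrow> s r (x + y) = s r x + s r y"
  unfolding module_on_def by blast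
lemma mod_smul_neg: assumes "module_on s S" "x \<in> S" shows "s r (- x) = - s r x"
proof -
  have "s r (x + - x) = s r x + s r (-x)" using mod_smul_add[OF assms(1,2) mod_neg[OF assms]] .
  moreover have "s r 0 = 0" using assms mod_zero[OF assms(1)] unfolding module_on_def
    by (metis add_cancel_right_right add.right_neutral)
  ultimately show ?thesis by (simp add: eq_neg_iff_add_eq_0 add.commute)
qed
lemma mod_smul_diff: "module_on s S \<Longrightarrow> x \<in> S \<Longrightarrow> y \<in> S \<Longrightarrow> s r (x - y) = s r x - s r y"
  using mod_smul_add[of s S x "-y" r] mod_smul_neg[of s S y r] mod_neg[of s S y] by simp

lemma gm_mem: "graded_map sM M sN N d f \<Longrightarrow> x \<in> M n \<Longrightarrow> m = n + d \<Longrightarrow> f n x \<in> N m"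
  unfolding graded_map_def by blast
lemma gm_add: "graded_map sM M sN N d f \<Longrightarrow> x \<in> M n \<Longrightarrow> y \<in> M n \<Longrightarrow> f n (x + y) = f n x + f n y"
  unfolding graded_map_def by blast
lemma gm_smul: "graded_map sM M sN N d f \<Longrightarrow> x \<in> M n \<Longrightarrow> f n (sM r x) = sN r (f n x)"
  unfolding graded_map_def by blast
lemma gm_zero: assumes "graded_map sM M sN N d f" "graded_module sM M" shows "f n 0 = 0"
proof -
  have z: "0 \<in> M n" using assms(2) mod_zero unfolding graded_module_def by blast
  have "f n (0 + 0) = f n 0 + f n 0" using gm_add[OF assms(1) z z] .
  thus ?thesis by simp
qed
lemma gm_neg: assumes "graded_map sM M sN N d f" "graded_module sM M" "x \<in> M n"
  shows "f n (- x) = - f n x"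
proof -
  have m: "- x \<in> M n" using assms(2,3) mod_neg unfolding graded_module_def by blast
  have "f n (x + - x) = f n x + f n (- x)" using gm_add[OF assms(1) assms(3) m] .
  thus ?thesis using gm_zero[OF assms(1,2)] by (simp add: eq_neg_iff_add_eq_0 add.commute)
qed
lemma gm_diff: assumes "graded_map sM M sN N d f" "graded_module sM M" "x \<in> M n" "y \<in> M n"
  shows "f n (x - y) = f n x - f n y"
  using gm_add[OF assms(1,3), of "-y"] gm_neg[OF assms(1,2,4)] assms(2,4) mod_neg
  unfolding graded_module_def by (metis diff_conv_add_uminus)



locale PS =
  fixes sL :: "'r::ring_1 \<Rightarrow> 'l::ab_group_add \<Rightarrow> 'l"
    and sM :: "'r \<Rightarrow> 'm::ab_group_add \<Rightarrow> 'm"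
    and L :: "int \<Rightarrow> 'l set" and M :: "int \<Rightarrow> 'm set"
    and bL :: "int \<Rightarrow> 'l \<Rightarrow> 'l" and bM :: "int \<Rightarrow> 'm \<Rightarrow> 'm"
    and i :: "int \<Rightarrow> 'l \<Rightarrow> 'm" and p :: "int \<Rightarrow> 'm \<Rightarrow> 'l"
    and h :: "int \<Rightarrow> 'm \<Rightarrow> 'm" and \<delta> :: "int \<Rightarrow> 'm \<Rightarrow> 'm"
    and g :: "int \<Rightarrow> 'm \<Rightarrow> 'm"
  assumes cL: "chain_complex sL L bL"
    and cM: "chain_complex sM M bM"
    and ci: "chain_map sL L bL sM M bM i"
    and cp: "chain_map sM M bM sL L bL p"
    and hh: "graded_map sM M sM M 1 h"
    and hom: "\<forall>n. \<forall>x\<in>M n. i n (p n x) = x + bM (n + 1) (h n x) + h (n - 1) (bM n x)"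
    and pert: "graded_map sM M sM M (-1) \<delta>"
    and pert_sq: "\<forall>n. \<forall>x\<in>M n.
        bM (n - 1) (bM n x + \<delta> n x) + \<delta> (n - 1) (bM n x + \<delta> n x) = 0"
    and g_map: "graded_map sM M sM M 0 g"
    and g_left: "\<forall>n. \<forall>x\<in>M n. g n (x - \<delta> (n + 1) (h n x)) = x"
    and g_right: "\<forall>n. \<forall>x\<in>M n. g n x - \<delta> (n + 1) (h n (g n x)) = x"
begin

lemma gL: "graded_module sL L" using cL unfolding chain_complex_def by blast
lemma gM: "graded_module sM M" using cM unfolding chain_complex_def by blast
lemma bLm: "graded_map sL L sL L (-1) bL" using cL unfolding chain_complex_def by blast
lemma bMm: "graded_map sM M sM M (-1) bM" using cM unfolding chain_complex_def by blast
lemma im: "graded_map sL L sM M 0 i" using ci unfolding chain_map_def by blast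
lemma pm: "graded_map sM M sL L 0 p" using cp unfolding chain_map_def by blast

lemma L_add[simp]: "x \<in> L n \<Longrightarrow> y \<in> L n \<Longrightarrow> x + y \<in> L n"
  and L_diff[simp]: "x \<in> L n \<Longrightarrow> y \<in> L n \<Longrightarrow> x - y \<in> L n"
  and L_neg[simp]: "x \<in> L n \<Longrightarrow> - x \<in> L n"
  and L_zero[simp]: "0 \<in> L n"
  and L_smul[simp]: "x \<in> L n \<Longrightarrow> sL r x \<in> L n"
  and L_smul_add[simp]: "x \<in> L n \<Longrightarrow> y \<in> L n \<Longrightarrow> sL r (x + y) = sL r x + sL r y"
  and L_smul_diff[simp]: "x \<in> L n \<Longrightarrow> y \<in> L n \<Longrightarrow> sL r (x - y) = sL r x - sL r y"
  using gL mod_add mod_diff mod_neg mod_zero mod_smul mod_smul_add mod_smul_diff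
  unfolding graded_module_def by metis+

lemma M_add[simp]: "x \<in> M n \<Longrightarrow> y \<in> M n \<Longrightarrow> x + y \<in> M n"
  and M_diff[simp]: "x \<in> M n \<Longrightarrow> y \<in> M n \<Longrightarrow> x - y \<in> M n"
  and M_neg[simp]: "x \<in> M n \<Longrightarrow> - x \<in> M n"
  and M_zero[simp]: "0 \<in> M n"
  and M_smul[simp]: "x \<in> M n \<Longrightarrow> sM r x \<in> M n"
  and M_smul_add[simp]: "x \<in> M n \<Longrightarrow> y \<in> M n \<Longrightarrow> sM r (x + y) = sM r x + sM r y"
  and M_smul_diff[simp]: "x \<in> M n \<Longrightarrow> y \<in> M n \<Longrightarrow> sM r (x - y) = sM r x - sM r y"
  using gM mod_add mod_diff mod_neg mod_zero mod_smul mod_smul_add mod_smul_diff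
  unfolding graded_module_def by metis+

lemmas bL_mem[simp] = gm_mem[OF bLm, simplified]
lemmas bL_add[simp] = gm_add[OF bLm]
lemmas bL_diff[simp] = gm_diff[OF bLm gL]
lemmas bL_neg[simp] = gm_neg[OF bLm gL]
lemmas bL_zero[simp] = gm_zero[OF bLm gL]
lemmas bL_smul[simp] = gm_smul[OF bLm]
lemmas bM_mem[simp] = gm_mem[OF bMm, simplified]
lemmas bM_add[simp] = gm_add[OF bMm]
lemmas bM_diff[simp] = gm_diff[OF bMm gM]
lemmas bM_neg[simp] = gm_neg[OF bMm gM]
lemmas bM_zero[simp] = gm_zero[OF bMm gM]
lemmas bM_smul[simp] = gm_smul[OF bMm]
lemmas i_mem[simp] = gm_mem[OF im, simplified]
lemmas i_add[simp] = gm_add[OF im]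
lemmas i_diff[simp] = gm_diff[OF im gL]
lemmas i_neg[simp] = gm_neg[OF im gL]
lemmas i_zero[simp] = gm_zero[OF im gL]
lemmas i_smul[simp] = gm_smul[OF im]
lemmas p_mem[simp] = gm_mem[OF pm, simplified]
lemmas p_add[simp] = gm_add[OF pm]
lemmas p_diff[simp] = gm_diff[OF pm gM]
lemmas p_neg[simp] = gm_neg[OF pm gM]
lemmas p_zero[simp] = gm_zero[OF pm gM]
lemmas p_smul[simp] = gm_smul[OF pm]
lemmas h_mem[simp] = gm_mem[OF hh, simplified]
lemmas h_add[simp] = gm_add[OF hh]
lemmas h_diff[simp] = gm_diff[OF hh gM]
lemmas h_neg[simp] = gm_neg[OF hh gM]
lemmas h_zero[simp] = gm_zero[OF hh gM]
lemmas h_smul[simp] = gm_smul[OF hh]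
lemmas d_mem[simp] = gm_mem[OF pert, simplified]
lemmas d_add[simp] = gm_add[OF pert]
lemmas d_diff[simp] = gm_diff[OF pert gM]
lemmas d_neg[simp] = gm_neg[OF pert gM]
lemmas d_zero[simp] = gm_zero[OF pert gM]
lemmas d_smul[simp] = gm_smul[OF pert]
lemmas g_mem[simp] = gm_mem[OF g_map, simplified]
lemmas g_add[simp] = gm_add[OF g_map]
lemmas g_diff[simp] = gm_diff[OF g_map gM]
lemmas g_neg[simp] = gm_neg[OF g_map gM]
lemmas g_zero[simp] = gm_zero[OF g_map gM]
lemmas g_smul[simp] = gm_smul[OF g_map]


lemma ib: "x \<in> L n \<Longrightarrow> bM n (i n x) = i (n - 1) (bL n x)"
  using ci unfolding chain_map_def by blast
lemma pb: "x \<in> M n \<Longrightarrow> bL n (p n x) = p (n - 1) (bM n x)"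
  using cp unfolding chain_map_def by blast
lemma bbL[simp]: "x \<in> L n \<Longrightarrow> bL (n - 1) (bL n x) = 0"
  using cL unfolding chain_complex_def by blast
lemma bbM[simp]: "x \<in> M n \<Longrightarrow> bM (n - 1) (bM n x) = 0"
  using cM unfolding chain_complex_def by blast
lemma hom': "x \<in> M n \<Longrightarrow> i n (p n x) = x + bM (n + 1) (h n x) + h (n - 1) (bM n x)"
  using hom by blast
lemma gl: "x \<in> M n \<Longrightarrow> k = n + 1 \<Longrightarrow> g n (x - \<delta> k (h n x)) = x"
  using g_left by blast
lemma gr: "x \<in> M n \<Longrightarrow> k = n + 1 \<Longrightarrow> g n x - \<delta> k (h n (g n x)) = x"
  using g_right by blast

definition "A n x = g (n - 1) (\<delta> n x)"
lemma A_mem[simp]: "x \<in> M n \<Longrightarrow> m = n - 1 \<Longrightarrow> A n x \<in> M m" by (simp add: A_def)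
lemma A_add[simp]: "x \<in> M n \<Longrightarrow> y \<in> M n \<Longrightarrow> A n (x + y) = A n x + A n y" by (simp add: A_def)
lemma A_diff[simp]: "x \<in> M n \<Longrightarrow> y \<in> M n \<Longrightarrow> A n (x - y) = A n x - A n y" by (simp add: A_def)
lemma A_neg[simp]: "x \<in> M n \<Longrightarrow> A n (- x) = - A n x" by (simp add: A_def)
lemma A_zero[simp]: "A n 0 = 0" by (simp add: A_def)
lemma A_smul[simp]: "x \<in> M n \<Longrightarrow> A n (sM r x) = sM r (A n x)" by (simp add: A_def)


lemma P2: "x \<in> M n \<Longrightarrow> A n x - \<delta> n (h (n - 1) (A n x)) = \<delta> n x"
  using gr[of "\<delta> n x" "n - 1" n] by (simp add: A_def)
lemma A1: "x \<in> M n \<Longrightarrow> A n x = \<delta> n x + \<delta> n (h (n - 1) (A n x))"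
  using P2[of x n] by (simp add: algebra_simps)
lemma P1: "x \<in> M n \<Longrightarrow> A n (x - h (n - 1) (\<delta> n x)) = \<delta> n x"
  using gl[of "\<delta> n x" "n - 1" n] by (simp add: A_def)
lemma A2: "x \<in> M n \<Longrightarrow> A n x = \<delta> n x + A n (h (n - 1) (\<delta> n x))"
  using P1[of x n] by (simp add: algebra_simps)

definition "Xf n x = bM (n - 1) (A n x) + A (n - 1) (bM n x) + A (n - 1) (A n x)
   + A (n - 1) (bM n (h (n - 1) (A n x))) + A (n - 1) (h (n - 1 - 1) (bM (n - 1) (A n x)))"

lemma Xf_mem[simp]: "x \<in> M n \<Longrightarrow> m = n - 1 - 1 \<Longrightarrow> Xf n x \<in> M m"
  by (simp add: Xf_def)

lemma X0: assumes x: "x \<in> M n" shows "Xf n x = 0"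
proof -
  define w where "w = x + h (n - 1) (A n x)"
  have w: "w \<in> M n" by (simp add: w_def x)
  have e1: "h (n - 1) (A n x) = h (n - 1) (\<delta> n x + \<delta> n (h (n - 1) (A n x)))"
    using arg_cong[where f="h (n - 1)", OF A1[OF x]] .
  have xw: "x = w - h (n - 1) (\<delta> n w)"
    using e1 x by (simp add: w_def)
  have Ax: "A n x = \<delta> n w" using P1[OF w] xw by simp
  define q where "q = bM n w + \<delta> n w + h (n - 1 - 1) (bM (n - 1) (\<delta> n w))"
  have q: "q \<in> M (n - 1)" by (simp add: q_def w)
  have bx: "bM n x = bM n w - bM n (h (n - 1) (\<delta> n w))"
    using xw w by (metis bM_diff d_mem h_mem diff_add_cancel)
  have X: "Xf n x = bM (n - 1) (\<delta> n w) + A (n - 1) q"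
    unfolding Xf_def Ax bx q_def using w by (simp add: algebra_simps)
  have Y: "Xf n x - \<delta> (n - 1) (h (n - 1 - 1) (Xf n x)) = 0"
  proof -
    have "Xf n x - \<delta> (n - 1) (h (n - 1 - 1) (Xf n x)) =
       bM (n - 1) (\<delta> n w) - \<delta> (n - 1) (h (n - 1 - 1) (bM (n - 1) (\<delta> n w)))
       + (A (n - 1) q - \<delta> (n - 1) (h (n - 1 - 1) (A (n - 1) q)))"
      unfolding X using w q by (simp add: algebra_simps)
    also have "... = bM (n - 1) (\<delta> n w) - \<delta> (n - 1) (h (n - 1 - 1) (bM (n - 1) (\<delta> n w)))
       + \<delta> (n - 1) q" using P2[OF q] by simp
    also have "... = bM (n - 1) (bM n w + \<delta> n w) + \<delta> (n - 1) (bM n w + \<delta> n w)"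
      unfolding q_def using w by (simp add: algebra_simps)
    also have "... = 0" using pert_sq w by blast
    finally show ?thesis .
  qed
  have "Xf n x = g (n - 1 - 1) (Xf n x - \<delta> (n - 1) (h (n - 1 - 1) (Xf n x)))"
    using gl[of "Xf n x" "n - 1 - 1" "n - 1"] x by simp
  thus ?thesis using Y by simp
qed


definition "ii n x = i n x + h (n - 1) (A n (i n x))"
definition "pp n x = p n x + p n (A (n + 1) (h n x))"
definition "bb n x = bL n x + p (n - 1) (A n (i n x))"
definition "hf n x = h n x + h n (A (n + 1) (h n x))"

lemma ii_mem[simp]: "x \<in> L n \<Longrightarrow> m = n \<Longrightarrow> ii n x \<in> M m" by (simp add: ii_def)
lemma pp_mem[simp]: "x \<in> M n \<Longrightarrow> m = n \<Longrightarrow> pp n x \<in> L m" by (simp add: pp_def)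
lemma bb_mem[simp]: "x \<in> L n \<Longrightarrow> m = n - 1 \<Longrightarrow> bb n x \<in> L m" by (simp add: bb_def)
lemma hf_mem[simp]: "x \<in> M n \<Longrightarrow> m = n + 1 \<Longrightarrow> hf n x \<in> M m" by (simp add: hf_def)
lemma ii_add[simp]: "x \<in> L n \<Longrightarrow> y \<in> L n \<Longrightarrow> ii n (x + y) = ii n x + ii n y"
  by (simp add: ii_def algebra_simps)
lemma pp_add[simp]: "x \<in> M n \<Longrightarrow> y \<in> M n \<Longrightarrow> pp n (x + y) = pp n x + pp n y"
  by (simp add: pp_def algebra_simps)
lemma bb_add[simp]: "x \<in> L n \<Longrightarrow> y \<in> L n \<Longrightarrow> bb n (x + y) = bb n x + bb n y"
  by (simp add: bb_def algebra_simps)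
lemma hf_add[simp]: "x \<in> M n \<Longrightarrow> y \<in> M n \<Longrightarrow> hf n (x + y) = hf n x + hf n y"
  by (simp add: hf_def algebra_simps)
lemma ii_diff[simp]: "x \<in> L n \<Longrightarrow> y \<in> L n \<Longrightarrow> ii n (x - y) = ii n x - ii n y"
  by (simp add: ii_def algebra_simps)
lemma pp_diff[simp]: "x \<in> M n \<Longrightarrow> y \<in> M n \<Longrightarrow> pp n (x - y) = pp n x - pp n y"
  by (simp add: pp_def algebra_simps)
lemma ii_smul[simp]: "x \<in> L n \<Longrightarrow> ii n (sL r x) = sM r (ii n x)" by (simp add: ii_def M_smul_add[of _ n])
lemma pp_smul[simp]: "x \<in> M n \<Longrightarrow> pp n (sM r x) = sL r (pp n x)" by (simp add: pp_def L_smul_add[of _ n])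
lemma bb_smul[simp]: "x \<in> L n \<Longrightarrow> bb n (sL r x) = sL r (bb n x)" by (simp add: bb_def L_smul_add[of _ "n - 1"])
lemma hf_smul[simp]: "x \<in> M n \<Longrightarrow> hf n (sM r x) = sM r (hf n x)" by (simp add: hf_def M_smul_add[of _ "n + 1"])
lemma hf_diff[simp]: "x \<in> M n \<Longrightarrow> y \<in> M n \<Longrightarrow> hf n (x - y) = hf n x - hf n y"
  by (simp add: hf_def algebra_simps)





lemma C1: assumes x: "x \<in> L n"
  shows "bM n (ii n x) + \<delta> n (ii n x) = ii (n - 1) (bb n x)"
proof -
  define y where "y = i n x"
  define a where "a = A n y"
  have y: "y \<in> M n" by (simp add: y_def x)
  have a: "a \<in> M (n - 1)" by (simp add: a_def y)
  have I: "i (n - 1) (bb n x) = bM n y + a + bM n (h (n - 1) a) + h (n - 1 - 1) (bM (n - 1) a)"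
    using hom'[OF a] ib[OF x] x a by (simp add: bb_def y_def a_def)
  have X: "bM (n - 1) a + A (n - 1) (bM n y) + A (n - 1) a + A (n - 1) (bM n (h (n - 1) a))
      + A (n - 1) (h (n - 1 - 1) (bM (n - 1) a)) = 0"
    using X0[OF y] unfolding Xf_def a_def .
  have XA: "A (n - 1) (i (n - 1) (bb n x)) = - bM (n - 1) a"
    unfolding I using X y a by (simp add: eq_neg_iff_add_eq_0 algebra_simps)
  have a1: "a = \<delta> n y + \<delta> n (h (n - 1) a)" unfolding a_def using A1[OF y] .
  show ?thesis
    unfolding ii_def[of "n - 1"] XA unfolding ii_def I using x y a
    apply (simp add: y_def[symmetric] a_def[symmetric])
    using a1 by (simp add: algebra_simps)
qed


lemma IPP: assumes x: "x \<in> M n"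
  shows "i n (pp n x) = x + bM (n + 1) (h n x) + h (n - 1) (bM n x) + A (n + 1) (h n x)
     + bM (n + 1) (h n (A (n + 1) (h n x))) + h (n - 1) (bM n (A (n + 1) (h n x)))"
  using hom'[OF x] hom'[of "A (n + 1) (h n x)" n] x by (simp add: pp_def algebra_simps)

lemma AIPP: assumes x: "x \<in> M n"
  shows "A n (i n (pp n x)) = A n x + A n (h (n - 1) (bM n x)) - bM n (A (n + 1) (h n x))"
proof -
  have y: "h n x \<in> M (n + 1)" using x by simp
  have X: "bM n (A (n + 1) (h n x)) + A n (bM (n + 1) (h n x)) + A n (A (n + 1) (h n x))
     + A n (bM (n + 1) (h n (A (n + 1) (h n x)))) + A n (h (n - 1) (bM n (A (n + 1) (h n x)))) = 0"
    using X0[OF y] unfolding Xf_def by simp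
  show ?thesis unfolding IPP[OF x] using x X
    by (simp add: algebra_simps eq_neg_iff_add_eq_0 diff_eq_eq)
qed

lemma C2: assumes x: "x \<in> M n"
  shows "pp (n - 1) (bM n x + \<delta> n x) = bb n (pp n x)"
proof -
  have a2: "A n x = \<delta> n x + A n (h (n - 1) (\<delta> n x))" using A2[OF x] .
  have L: "pp (n - 1) (bM n x + \<delta> n x) = p (n - 1) (bM n x) + p (n - 1) (A n x)
      + p (n - 1) (A n (h (n - 1) (bM n x)))"
    using x arg_cong[where f="p (n - 1)", OF a2] by (simp add: pp_def algebra_simps)
  have R: "bb n (pp n x) = p (n - 1) (bM n x) + p (n - 1) (A n x)
      + p (n - 1) (A n (h (n - 1) (bM n x)))"
    unfolding bb_def AIPP[OF x] using x pb[OF x] pb[of "A (n + 1) (h n x)" n]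
    by (simp add: pp_def algebra_simps)
  show ?thesis using L R by simp
qed

lemma H: assumes x: "x \<in> M n"
  shows "ii n (pp n x) = x + bM (n + 1) (hf n x) + \<delta> (n + 1) (hf n x) + hf (n - 1) (bM n x + \<delta> n x)"
proof -
  have y: "h n x \<in> M (n + 1)" using x by simp
  have a1: "A (n + 1) (h n x) = \<delta> (n + 1) (h n x) + \<delta> (n + 1) (h n (A (n + 1) (h n x)))"
    using A1[OF y] by simp
  have a2: "h (n - 1) (A n x) = h (n - 1) (\<delta> n x + A n (h (n - 1) (\<delta> n x)))"
    using arg_cong[where f="h (n - 1)", OF A2[OF x]] .
  show ?thesis
    unfolding ii_def AIPP[OF x] unfolding IPP[OF x] using x a2
    apply (simp add: hf_def algebra_simps)
    using a1 by (simp add: algebra_simps)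
qed


lemma claim1: "null_homotopic sL L bb sM M bM (\<lambda>n x. i n (p n (ii n x) - x))"
  unfolding null_homotopic_def
proof (intro exI[of _ "\<lambda>n x. h n (ii n x)"] conjI allI ballI)
  show "graded_map sL L sM M 1 (\<lambda>n x. h n (ii n x))" unfolding graded_map_def by simp
  fix n x assume x: "x \<in> L n"
  have y: "i n x \<in> M n" using x by simp
  have e: "h (n - 1) (A n (i n x)) = h (n - 1) (\<delta> n (i n x) + \<delta> n (h (n - 1) (A n (i n x))))"
    using arg_cong[where f="h (n - 1)", OF A1[OF y]] .
  show "i n (p n (ii n x) - x) = bM (n + 1) (h n (ii n x)) + h (n - 1) (ii (n - 1) (bb n x))"
    unfolding C1[OF x, symmetric] using x hom'[of "ii n x" n] e
    by (simp add: ii_def algebra_simps)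
qed


lemma claim2: "null_homotopic sM M bM sL L bb (\<lambda>n x. pp n (i n (p n x)) - p n x)"
  unfolding null_homotopic_def
proof (intro exI[of _ "\<lambda>n x. pp (n + 1) (h n x)"] conjI allI ballI)
  show "graded_map sM M sL L 1 (\<lambda>n x. pp (n + 1) (h n x))" unfolding graded_map_def by simp
  fix n x assume x: "x \<in> M n"
  have y: "h n x \<in> M (n + 1)" using x by simp
  have c2: "pp n (bM (n + 1) (h n x) + \<delta> (n + 1) (h n x)) = bb (n + 1) (pp (n + 1) (h n x))"
    using C2[OF y] by simp
  have a2: "p n (A (n + 1) (h n x)) = p n (\<delta> (n + 1) (h n x) + A (n + 1) (h n (\<delta> (n + 1) (h n x))))"
    using arg_cong[where f="p n", OF A2[OF y]] by simp
  show "pp n (i n (p n x)) - p n x = bb (n + 1) (pp (n + 1) (h n x)) + pp (n - 1 + 1) (h (n - 1) (bM n x))"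
    unfolding c2[symmetric] hom'[OF x] using x a2
    by (simp add: pp_def algebra_simps)
qed

lemma claim3: "null_homotopic sM M (\<lambda>n x. bM n x + \<delta> n x) sL L bL
           (\<lambda>n x. p n (ii n (pp n x)) - pp n x)"
  unfolding null_homotopic_def
proof (intro exI[of _ "\<lambda>n x. p (n + 1) (hf n x)"] conjI allI ballI)
  show "graded_map sM M sL L 1 (\<lambda>n x. p (n + 1) (hf n x))" unfolding graded_map_def by simp
  fix n x assume x: "x \<in> M n"
  have y: "h n x \<in> M (n + 1)" using x by simp
  have a1: "p n (A (n + 1) (h n x)) = p n (\<delta> (n + 1) (h n x) + \<delta> (n + 1) (h n (A (n + 1) (h n x))))"
    using arg_cong[where f="p n", OF A1[OF y]] by simp
  have pb1: "bL (n + 1) (p (n + 1) (hf n x)) = p n (bM (n + 1) (hf n x))"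
    using pb[of "hf n x" "n + 1"] x by simp
  show "p n (ii n (pp n x)) - pp n x = bL (n + 1) (p (n + 1) (hf n x)) + p (n - 1 + 1) (hf (n - 1) (bM n x + \<delta> n x))"
    unfolding pb1 H[OF x] using x a1
    by (simp add: pp_def hf_def algebra_simps)
qed

lemma claim4: "null_homotopic sL L bL sM M (\<lambda>n x. bM n x + \<delta> n x)
           (\<lambda>n x. ii n (pp n (i n x) - x))"
  unfolding null_homotopic_def
proof (intro exI[of _ "\<lambda>n x. hf n (i n x)"] conjI allI ballI)
  show "graded_map sL L sM M 1 (\<lambda>n x. hf n (i n x))" unfolding graded_map_def by simp
  fix n x assume x: "x \<in> L n"
  have y: "i n x \<in> M n" using x by simp
  have a2: "h (n - 1) (A n (i n x)) = h (n - 1) (\<delta> n (i n x) + A n (h (n - 1) (\<delta> n (i n x))))"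
    using arg_cong[where f="h (n - 1)", OF A2[OF y]] .
  show "ii n (pp n (i n x) - x) = bM (n + 1) (hf n (i n x)) + \<delta> (n + 1) (hf n (i n x))
      + hf (n - 1) (i (n - 1) (bL n x))"
    unfolding ib[OF x, symmetric] using x y H[OF y] a2
    by (simp add: ii_def hf_def algebra_simps)
qed

end

theorem lemma1p8:
  fixes sL :: "'r::ring_1 \<Rightarrow> 'l::ab_group_add \<Rightarrow> 'l"
    and sM :: "'r \<Rightarrow> 'm::ab_group_add \<Rightarrow> 'm"
    and L :: "int \<Rightarrow> 'l set" and M :: "int \<Rightarrow> 'm set"
    and bL :: "int \<Rightarrow> 'l \<Rightarrow> 'l" and bM :: "int \<Rightarrow> 'm \<Rightarrow> 'm"
    and i :: "int \<Rightarrow> 'l \<Rightarrow> 'm" and p :: "int \<Rightarrow> 'm \<Rightarrow> 'l"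
    and h :: "int \<Rightarrow> 'm \<Rightarrow> 'm" and \<delta> :: "int \<Rightarrow> 'm \<Rightarrow> 'm"
    and g :: "int \<Rightarrow> 'm \<Rightarrow> 'm"
  assumes cL: "chain_complex sL L bL"
    and cM: "chain_complex sM M bM"
    and ci: "chain_map sL L bL sM M bM i"
    and cp: "chain_map sM M bM sL L bL p"
    and hh: "graded_map sM M sM M 1 h"
    and hom: "\<forall>n. \<forall>x\<in>M n. i n (p n x) = x + bM (n + 1) (h n x) + h (n - 1) (bM n x)"
    and pert: "graded_map sM M sM M (-1) \<delta>"
    and pert_sq: "\<forall>n. \<forall>x\<in>M n.
        bM (n - 1) (bM n x + \<delta> n x) + \<delta> (n - 1) (bM n x + \<delta> n x) = 0"
    and g_map: "graded_map sM M sM M 0 g"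
    and g_left: "\<forall>n. \<forall>x\<in>M n. g n (x - \<delta> (n + 1) (h n x)) = x"
    and g_right: "\<forall>n. \<forall>x\<in>M n. g n x - \<delta> (n + 1) (h n (g n x)) = x"
  defines "i_inf \<equiv> \<lambda>n x. i n x + h (n - 1) (g (n - 1) (\<delta> n (i n x)))"
    and "p_inf \<equiv> \<lambda>n x. p n x + p n (g n (\<delta> (n + 1) (h n x)))"
    and "b_inf \<equiv> \<lambda>n x. bL n x + p (n - 1) (g (n - 1) (\<delta> n (i n x)))"
  shows "null_homotopic sL L b_inf sM M bM (\<lambda>n x. i n (p n (i_inf n x) - x))
    \<and> null_homotopic sM M bM sL L b_inf (\<lambda>n x. p_inf n (i n (p n x)) - p n x)
    \<and> null_homotopic sM M (\<lambda>n x. bM n x + \<delta> n x) sL L bL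
           (\<lambda>n x. p n (i_inf n (p_inf n x)) - p_inf n x)
    \<and> null_homotopic sL L bL sM M (\<lambda>n x. bM n x + \<delta> n x)
           (\<lambda>n x. i_inf n (p_inf n (i n x) - x))"
  
proof -
  interpret P: PS sL sM L M bL bM i p h \<delta> g
    unfolding PS_def using cL cM ci cp hh hom pert pert_sq g_map g_left g_right by blast
  have ei: "i_inf = P.ii" unfolding assms(12) by (intro ext) (simp add: P.ii_def P.A_def)
  have ep: "p_inf = P.pp" unfolding assms(13) by (intro ext) (simp add: P.pp_def P.A_def)
  have eb: "b_inf = P.bb" unfolding assms(14) by (intro ext) (simp add: P.bb_def P.A_def)
  show ?thesis unfolding ei ep eb using P.claim1 P.claim2 P.claim3 P.claim4 by blast
qed

end
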